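(* On $\mathbf W$ we have $p^\perp(\mathcal X)\,h^\perp_{D-1}(\mathcal X)=0$, where $p^\perp(\eta)=\eta^{-1}(\eta-\tau)(\eta-\tau^{-1}q^{-D})$ and $h^\perp_{D-1}(\eta)=\eta^{1-D}\prod_{n=1}^{D-1}(\eta-\tau q^n)(\eta-\tau^{-1}q^{-n})$ with $\tau=\sqrt{-1}\,q^{-(D+e)/2}$.
   Context: Dual polar graph setting: $q$ a prime power, $D\ge3$; $\mathbb V$ one of: $2D$-dim. over $\mathbb F_q$ with non-degenerate alternating form ($e=1$); $(2D+1)$-dim. quadratic ($e=1$); $2D$-dim. quadratic of Witt index $D$ ($e=0$); $(2D+2)$-dim. quadratic of Witt index $D$ ($e=2$); $(2D+1)$-dim. Hermitian, $q=r^2$ ($e=3/2$); $2D$-dim. Hermitian, $q=r^2$ ($e=1/2$). $X$ is the set of maximal isotropic subspaces, $\Gamma$ the graph on $X$ with $y\sim z$ iff $\dim(y\cap z)=D-1$, $\partial$ path-length distance, $\Gamma_i(y)=\{z:\partial(y,z)=i\}$. Fix a vertex $x$ and maximal clique $C\ni x$; for $0\le i\le D-1$, $C_i=\{y:\min_{z\in C}\partial(y,z)=i\}$, $C_i^-=\Gamma_i(x)\cap C_i$, $C_i^+=\Gamma_{i+1}(x)\cap C_i$. In $V=\mathbb C^X$, $\hat Y$ is the characteristic vector of $Y$; $\mathbf W=\operatorname{span}\{\hat C_i^\pm\}$ with ordered basis $(\hat C_0^-,\hat C_0^+,\dots,\hat C_{D-1}^-,\hat C_{D-1}^+)$. Define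 $2\times2$ matrices $t(i)=\begin{pmatrix} q^{-e/2}-q^{e/2} & q^{e/2}\\ q^{-e/2}&0\end{pmatrix}$ ($0\le i\le D-1$), $t'(i)=\sqrt{-1}\begin{pmatrix} q^{-D/2}(q^D-q^i+1) & q^{D/2}(q^{i-D}-1)\\ q^{-D/2}(1-q^i) & q^{i-D/2}\end{pmatrix}$ ($1\le i\le D-1$), and $t'(0)=t'(D)=(\sqrt{-1}\,q^{-D/2})$; $\mathfrak t=\operatorname{blockdiag}(t(0),\dots,t(D-1))$, $\mathfrak t'=\operatorname{blockdiag}(t'(0),\dots,t'(D))$. $\mathcal X$ is the invertible operator on $\mathbf W$ with matrix $\mathfrak t'\mathfrak t$ in the ordered basis above. *)

theory Defs
  imports "Jordan_Normal_Form.Matrix" Complex_Main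
begin

definition qp :: "nat \<Rightarrow> real \<Rightarrow> complex" where
  "qp q x = complex_of_real (real q powr x)"

text \<open>Matrix t(i) (independent of i), entry (a,b) with a,b in {0,1}.\<close>
definition t_entry :: "nat \<Rightarrow> real \<Rightarrow> nat \<Rightarrow> nat \<Rightarrow> complex" where
  "t_entry q e a b =
     (if a = 0 \<and> b = 0 then qp q (- e / 2) - qp q (e / 2)
      else if a = 0 \<and> b = 1 then qp q (e / 2)
      else if a = 1 \<and> b = 0 then qp q (- e / 2)
      else 0)"

text \<open>Matrix t'(i) for 1 <= i <= D-1, entry (a,b) with a,b in {0,1}.\<close>
definition t'_entry :: "nat \<Rightarrow> nat \<Rightarrow> nat \<Rightarrow> nat \<Rightarrow> nat \<Rightarrow> complex" where
  "t'_entry D q i a b = \<i> *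
     (if a = 0 \<and> b = 0 then qp q (- real D / 2) * (qp q (real D) - qp q (real i) + 1)
      else if a = 0 \<and> b = 1 then qp q (real D / 2) * (qp q (real i - real D) - 1)
      else if a = 1 \<and> b = 0 then qp q (- real D / 2) * (1 - qp q (real i))
      else qp q (real i - real D / 2))"

text \<open>Block diagonal matrix blockdiag(t(0),...,t(D-1)) of size 2D, basis index r
  (0-based) corresponds to hat C_{r div 2}^{-} (r even) or hat C_{r div 2}^{+} (r odd).\<close>
definition tmat :: "nat \<Rightarrow> nat \<Rightarrow> real \<Rightarrow> complex mat" where
  "tmat D q e = mat (2 * D) (2 * D)
     (\<lambda>(r, c). if r div 2 = c div 2 then t_entry q e (r mod 2) (c mod 2) else 0)"

text \<open>Block diagonal matrix blockdiag(t'(0),...,t'(D)) of size 1+2(D-1)+1 = 2D: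
  t'(0) occupies index 0, t'(i) (1<=i<=D-1) occupies indices 2i-1, 2i,
  t'(D) occupies index 2D-1. The block of index r is (r+1) div 2.\<close>
definition t'mat :: "nat \<Rightarrow> nat \<Rightarrow> complex mat" where
  "t'mat D q = mat (2 * D) (2 * D)
     (\<lambda>(r, c). if (r + 1) div 2 \<noteq> (c + 1) div 2 then 0
              else (let i = (r + 1) div 2 in
                    if i = 0 \<or> i = D then \<i> * qp q (- real D / 2)
                    else t'_entry D q i ((r + 1) mod 2) ((c + 1) mod 2)))"

definition Xmat :: "nat \<Rightarrow> nat \<Rightarrow> real \<Rightarrow> complex mat" where
  "Xmat D q e = t'mat D q * tmat D q e"

definition tau :: "nat \<Rightarrow> nat \<Rightarrow> real \<Rightarrow> complex" where
  "tau D q e = \<i> * qp q (- (real D + e) / 2)"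

text \<open>p^perp(X) with X^{-1} given by Y.\<close>
definition p_perp :: "nat \<Rightarrow> nat \<Rightarrow> real \<Rightarrow> complex mat \<Rightarrow> complex mat \<Rightarrow> complex mat" where
  "p_perp D q e Y X = Y * ((X - tau D q e \<cdot>\<^sub>m 1\<^sub>m (dim_row X)) *
      (X - (inverse (tau D q e) * qp q (- real D)) \<cdot>\<^sub>m 1\<^sub>m (dim_row X)))"

definition h_perp :: "nat \<Rightarrow> nat \<Rightarrow> real \<Rightarrow> complex mat \<Rightarrow> complex mat \<Rightarrow> complex mat" where
  "h_perp D q e Y X = (Y ^\<^sub>m (D - 1)) *
      foldr (\<lambda>n M. ((X - (tau D q e * qp q (real n)) \<cdot>\<^sub>m 1\<^sub>m (dim_row X)) *
                     (X - (inverse (tau D q e) * qp q (- real n)) \<cdot>\<^sub>m 1\<^sub>m (dim_row X))) * M)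
            [1..<D] (1\<^sub>m (dim_row X))"

definition prime_power :: "nat \<Rightarrow> bool" where
  "prime_power q \<longleftrightarrow> (\<exists>p k. prime p \<and> k > 0 \<and> q = p ^ k)"

end

theory Submission
  imports Defs "HOL-Computational_Algebra.Polynomial" "HOL-Library.Multiset" "Jordan_Normal_Form.Determinant"
begin


locale L = fixes D q :: nat and e :: real
  assumes D1: "D \<ge> 1" and q2: "q \<ge> 2"
begin

definition "n = 2 * D"
definition "Q = (of_nat q :: complex)"
definition "a = qp q (- e / 2)"
definition "ai = qp q (e / 2)"
definition "s = qp q (real D / 2)"
definition "si = qp q (- real D / 2)"

lemma qp_add: "qp q x * qp q y = qp q (x + y)"
  using q2 by (simp add: qp_def powr_add)

lemma qp_nat: "qp q (real k) = Q ^ k"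
  using q2 by (simp add: qp_def Q_def powr_realpow)

lemma qp_neg_nat: "qp q (- real k) = inverse (Q ^ k)"
  using q2 by (simp add: qp_def Q_def powr_minus powr_realpow)

lemma qp0: "qp q 0 = 1" using q2 by (simp add: qp_def)

lemma Q_nz: "Q \<noteq> 0" using q2 by (simp add: Q_def)

lemma a_ai: "a * ai = 1" unfolding a_def ai_def qp_add by (simp add: qp0)
lemma s_si: "s * si = 1" unfolding s_def si_def qp_add by (simp add: qp0)
lemma s_s: "s * s = Q ^ D" unfolding s_def qp_add by (simp add: qp_nat[symmetric])

lemma tau_eq: "tau D q e = \<i> * si * a"
proof -
  have "qp q (- (real D + e) / 2) = si * a" unfolding si_def a_def qp_add by (simp add: field_simps)
  then show ?thesis by (simp add: tau_def)
qed

lemma qp_i_D: "qp q (real i - real D) = Q ^ i * inverse (Q ^ D)"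
proof -
  have "qp q (real i - real D) = qp q (real i) * qp q (- real D)" by (simp add: qp_add)
  then show ?thesis by (simp add: qp_nat qp_neg_nat)
qed

lemma qp_i_D2: "qp q (real i - real D / 2) = Q ^ i * si"
proof -
  have "qp q (real i - real D / 2) = qp q (real i) * qp q (- real D / 2)" by (simp add: qp_add)
  then show ?thesis by (simp add: qp_nat si_def)
qed

lemma n_def2: "n = 2 * D" by (simp add: n_def)
lemma si_inv: "si = inverse s" using inverse_unique[OF s_si] by simp
lemma s_nz: "s \<noteq> 0" using s_si by auto
lemma ai_inv: "ai = inverse a" using inverse_unique[OF a_ai] by simp
lemma a_nz: "a \<noteq> 0" using a_ai by auto
lemma QD: "Q ^ D = s * s" using s_s by simp

definition Af :: "(nat \<Rightarrow> complex) \<Rightarrow> nat \<Rightarrow> complex" where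
 "Af v r = (if r < n then (if even r then (a - ai) * v r + ai * v (Suc r) else a * v (r - 1)) else 0)"
definition Ainv :: "(nat \<Rightarrow> complex) \<Rightarrow> nat \<Rightarrow> complex" where
 "Ainv v r = (if r < n then (if even r then ai * v (Suc r) else a * v (r - 1) - (a - ai) * v r) else 0)"
definition Bf :: "(nat \<Rightarrow> complex) \<Rightarrow> nat \<Rightarrow> complex" where
 "Bf v r = (if r < n then (if r = 0 \<or> r = n - 1 then \<i> * si * v r
     else if odd r then \<i> * (si * (Q^D - Q^((r+1) div 2) + 1)) * v r + \<i> * (s * (Q^((r+1) div 2) * inverse (Q^D) - 1)) * v (Suc r)
     else \<i> * (si * (1 - Q^(r div 2))) * v (r - 1) + \<i> * (Q^(r div 2) * si) * v r) else 0)"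
definition Binv :: "(nat \<Rightarrow> complex) \<Rightarrow> nat \<Rightarrow> complex" where
 "Binv v r = (if r < n then (if r = 0 \<or> r = n - 1 then - \<i> * s * v r
     else if odd r then - \<i> * (Q^((r+1) div 2) * si * v r + (s - Q^((r+1) div 2) * si) * v (Suc r))
     else - \<i> * (si * (Q^(r div 2) - 1) * v (r - 1) + (s + si - Q^(r div 2) * si) * v r)) else 0)"

lemma n_even: "even n" by (simp add: n_def)
lemma n_pos: "n \<ge> 2" using D1 by (simp add: n_def)

lemma even_Suc_lt: "even r \<Longrightarrow> r < n \<Longrightarrow> Suc r < n"
  using n_even by (metis Suc_lessI even_Suc)

lemma Af_Ainv: assumes "r < n" shows "Af (Ainv v) r = v r"
proof (cases "even r")
  case True
  with assms have "Suc r < n" by (simp add: even_Suc_lt)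
  with True assms show ?thesis unfolding Af_def Ainv_def
    using a_nz by (simp add: ai_inv field_simps)
next
  case False
  then have "even (r - 1)" "Suc (r - 1) = r" "r - 1 < n" using assms by (auto elim: oddE)
  with False assms show ?thesis unfolding Af_def Ainv_def
    using a_nz by (simp add: ai_inv field_simps)
qed

lemma Ainv_Af: assumes "r < n" shows "Ainv (Af v) r = v r"
proof (cases "even r")
  case True
  with assms have "Suc r < n" by (simp add: even_Suc_lt)
  with True assms show ?thesis unfolding Af_def Ainv_def
    using a_nz by (simp add: ai_inv field_simps)
next
  case False
  then have "even (r - 1)" "Suc (r - 1) = r" "r - 1 < n" using assms by (auto elim: oddE)
  with False assms show ?thesis unfolding Af_def Ainv_def
    using a_nz by (simp add: ai_inv field_simps)
qed

end

context L begin

lemma Bf_Binv: assumes "r < n" shows "Bf (Binv v) r = v r"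
proof -
  have n1: "n - 1 \<noteq> 0" "odd (n - 1)" using n_pos n_even by auto
  consider "r = 0" | "r = n - 1" | "odd r" "r \<noteq> n - 1" | "even r" "r \<noteq> 0" by blast
  then show ?thesis
  proof cases
    case 1 then show ?thesis using assms n1 s_si by (simp add: Bf_def Binv_def algebra_simps)
  next
    case 2 then show ?thesis using assms n1 s_si by (simp add: Bf_def Binv_def algebra_simps)
  next
    case 3
    then have f: "Suc r < n" "even (Suc r)" "Suc r \<noteq> n - 1" "Suc r div 2 = (r + 1) div 2" "r \<noteq> 0"
      using assms unfolding n_def2 by presburger+
    define k where "k = (r + 1) div 2"
    have "Bf (Binv v) r = \<i> * (si * (Q^D - Q^k + 1)) * (- \<i> * (Q^k * si * v r + (s - Q^k * si) * v (Suc r)))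
       + \<i> * (s * (Q^k * inverse (Q^D) - 1)) * (- \<i> * (si * (Q^k - 1) * v r + (s + si - Q^k * si) * v (Suc r)))"
      using 3 f assms unfolding k_def by (simp add: Bf_def Binv_def)
    also have "\<dots> = v r" unfolding si_inv QD using s_nz by (simp add: field_simps)
    finally show ?thesis .
  next
    case 4
    then have f: "r - 1 < n" "odd (r - 1)" "r - 1 \<noteq> n - 1" "r - 1 \<noteq> 0" "(r - 1 + 1) div 2 = r div 2" "Suc (r - 1) = r" "r \<noteq> n - 1"
      using assms unfolding n_def2 by presburger+
    define k where "k = r div 2"
    have "Bf (Binv v) r = \<i> * (si * (1 - Q^k)) * (- \<i> * (Q^k * si * v (r - 1) + (s - Q^k * si) * v r))
       + \<i> * (Q^k * si) * (- \<i> * (si * (Q^k - 1) * v (r - 1) + (s + si - Q^k * si) * v r))"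
      using 4 f assms unfolding k_def by (simp add: Bf_def Binv_def)
    also have "\<dots> = v r" unfolding si_inv QD using s_nz by (simp add: field_simps)
    finally show ?thesis .
  qed
qed

lemma Binv_Bf: assumes "r < n" shows "Binv (Bf v) r = v r"
proof -
  have n1: "n - 1 \<noteq> 0" "odd (n - 1)" using n_pos n_even by auto
  consider "r = 0" | "r = n - 1" | "odd r" "r \<noteq> n - 1" | "even r" "r \<noteq> 0" by blast
  then show ?thesis
  proof cases
    case 1 then show ?thesis using assms n1 s_si by (simp add: Bf_def Binv_def algebra_simps)
  next
    case 2 then show ?thesis using assms n1 s_si by (simp add: Bf_def Binv_def algebra_simps)
  next
    case 3
    then have f: "Suc r < n" "even (Suc r)" "Suc r \<noteq> n - 1" "Suc r div 2 = (r + 1) div 2" "r \<noteq> 0"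
      using assms unfolding n_def2 by presburger+
    define k where "k = (r + 1) div 2"
    have "Binv (Bf v) r = - \<i> * (Q^k * si * (\<i> * (si * (Q^D - Q^k + 1)) * v r + \<i> * (s * (Q^k * inverse (Q^D) - 1)) * v (Suc r))
       + (s - Q^k * si) * (\<i> * (si * (1 - Q^k)) * v r + \<i> * (Q^k * si) * v (Suc r)))"
      using 3 f assms unfolding k_def by (simp add: Bf_def Binv_def)
    also have "\<dots> = v r" unfolding si_inv QD using s_nz by (simp add: field_simps)
    finally show ?thesis .
  next
    case 4
    then have f: "r - 1 < n" "odd (r - 1)" "r - 1 \<noteq> n - 1" "r - 1 \<noteq> 0" "(r - 1 + 1) div 2 = r div 2" "Suc (r - 1) = r" "r \<noteq> n - 1"
      using assms unfolding n_def2 by presburger+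
    define k where "k = r div 2"
    have "Binv (Bf v) r = - \<i> * (si * (Q^k - 1) * (\<i> * (si * (Q^D - Q^k + 1)) * v (r - 1) + \<i> * (s * (Q^k * inverse (Q^D) - 1)) * v r)
       + (s + si - Q^k * si) * (\<i> * (si * (1 - Q^k)) * v (r - 1) + \<i> * (Q^k * si) * v r))"
      using 4 f assms unfolding k_def by (simp add: Bf_def Binv_def)
    also have "\<dots> = v r" unfolding si_inv QD using s_nz by (simp add: field_simps)
    finally show ?thesis .
  qed
qed

lemma Af_cong: assumes "\<And>j. j < n \<Longrightarrow> f j = g j" shows "Af f = Af g"
proof (rule ext)
  fix r show "Af f r = Af g r"
    using assms even_Suc_lt[of r] by (auto simp: Af_def)
qed

lemma Ainv_cong: assumes "\<And>j. j < n \<Longrightarrow> f j = g j" shows "Ainv f = Ainv g"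
proof (rule ext)
  fix r show "Ainv f r = Ainv g r"
    using assms even_Suc_lt[of r] by (auto simp: Ainv_def)
qed

lemma odd_Suc_lt: "odd r \<Longrightarrow> r < n \<Longrightarrow> r \<noteq> n - 1 \<Longrightarrow> Suc r < n"
  by linarith

lemma Bf_cong: assumes "\<And>j. j < n \<Longrightarrow> f j = g j" shows "Bf f = Bf g"
proof (rule ext)
  fix r show "Bf f r = Bf g r"
    using assms odd_Suc_lt[of r] by (auto simp: Bf_def)
qed

lemma Binv_cong: assumes "\<And>j. j < n \<Longrightarrow> f j = g j" shows "Binv f = Binv g"
proof (rule ext)
  fix r show "Binv f r = Binv g r"
    using assms odd_Suc_lt[of r] by (auto simp: Binv_def)
qed

definition "Xf v = Bf (Af v)"
definition "Yf v = Ainv (Binv v)"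

lemma Xf_cong: "(\<And>j. j < n \<Longrightarrow> f j = g j) \<Longrightarrow> Xf f = Xf g"
  unfolding Xf_def by (metis Af_cong)
lemma Yf_cong: "(\<And>j. j < n \<Longrightarrow> f j = g j) \<Longrightarrow> Yf f = Yf g"
  unfolding Yf_def by (metis Binv_cong)

lemma Xf_Yf: "r < n \<Longrightarrow> Xf (Yf v) r = v r"
proof -
  assume r: "r < n"
  have "Af (Ainv (Binv v)) = Af (Binv v) \<or> True" by simp
  have "Bf (Af (Ainv (Binv v))) = Bf (Binv v)" by (rule Bf_cong) (simp add: Af_Ainv)
  then show ?thesis using r by (simp add: Xf_def Yf_def Bf_Binv)
qed

lemma Yf_Xf: "r < n \<Longrightarrow> Yf (Xf v) r = v r"
proof -
  assume r: "r < n"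
  have "Ainv (Binv (Bf (Af v))) = Ainv (Af v)" by (rule Ainv_cong) (simp add: Binv_Bf)
  then show ?thesis using r by (simp add: Xf_def Yf_def Ainv_Af)
qed

lemma Af_lin: "Af (\<lambda>j. \<alpha> * f j + \<beta> * g j) = (\<lambda>r. \<alpha> * Af f r + \<beta> * Af g r)"
  by (rule ext) (simp add: Af_def algebra_simps)
lemma Bf_lin: "Bf (\<lambda>j. \<alpha> * f j + \<beta> * g j) = (\<lambda>r. \<alpha> * Bf f r + \<beta> * Bf g r)"
  by (rule ext) (simp add: Bf_def algebra_simps)
lemma Ainv_lin: "Ainv (\<lambda>j. \<alpha> * f j + \<beta> * g j) = (\<lambda>r. \<alpha> * Ainv f r + \<beta> * Ainv g r)"
  by (rule ext) (simp add: Ainv_def algebra_simps)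
lemma Binv_lin: "Binv (\<lambda>j. \<alpha> * f j + \<beta> * g j) = (\<lambda>r. \<alpha> * Binv f r + \<beta> * Binv g r)"
  by (rule ext) (simp add: Binv_def algebra_simps)
lemma Xf_lin: "Xf (\<lambda>j. \<alpha> * f j + \<beta> * g j) = (\<lambda>r. \<alpha> * Xf f r + \<beta> * Xf g r)"
  unfolding Xf_def Af_lin Bf_lin ..
lemma Yf_lin: "Yf (\<lambda>j. \<alpha> * f j + \<beta> * g j) = (\<lambda>r. \<alpha> * Yf f r + \<beta> * Yf g r)"
  unfolding Yf_def Binv_lin Ainv_lin ..

lemma Xf_out: "r \<ge> n \<Longrightarrow> Xf v r = 0" by (simp add: Xf_def Bf_def)
lemma Yf_out: "r \<ge> n \<Longrightarrow> Yf v r = 0" by (simp add: Yf_def Ainv_def)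

lemma QD1: "Q ^ (D - 1) = s * s / Q"
proof -
  have "Q ^ D = Q * Q ^ (D - 1)" using D1 by (metis One_nat_def Suc_pred less_eq_Suc_le power_Suc)
  then show ?thesis using Q_nz QD by (simp add: field_simps)
qed

definition "Zf v r = Xf v r + Yf v r / Q"

definition Tp :: "(nat \<Rightarrow> complex) \<Rightarrow> nat \<Rightarrow> complex" where
  "Tp w i = \<i> * si * (a * (1 - Q^i) * w (i - 1) + (a - ai) * Q^i * w i + (Q^i - Q^(D-1)) * ai * w (Suc i))"

lemma Zf_even: assumes i: "i < D"
  shows "Zf v (2*i) = Tp (\<lambda>j. v (2*j)) i"
proof -
  have n1: "n - 1 \<noteq> 0" "odd (n - 1)" using n_pos n_even by auto
  have A1: "Af v (2*i) = (a - ai) * v (2*i) + ai * v (Suc (2*i))" using i by (simp add: Af_def n_def2)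
  have X: "Xf v (2*i) = \<i> * si * (a * (1 - Q^i) * v (2*i - 2) + (a - ai) * Q^i * v (2*i) + Q^i * ai * v (Suc (2*i)))"
  proof (cases "i = 0")
    case True
    have "Xf v 0 = \<i> * si * Af v 0" using n_pos by (simp add: Xf_def Bf_def)
    also have "\<dots> = \<i> * si * ((a - ai) * v 0 + ai * v (Suc 0))" using A1 True by simp
    finally show ?thesis using True by (simp add: algebra_simps)
  next
    case False
    then have f: "2*i \<noteq> 0" "2*i \<noteq> n - 1" "2*i < n" "2*i - 1 < n" "odd (2*i - 1)" "2*i - 1 - 1 = 2*i - 2"
      using i unfolding n_def2 by presburger+
    have A2: "Af v (2*i - 1) = a * v (2*i - 2)" using f by (simp add: Af_def)
    have "Xf v (2*i) = \<i> * (si * (1 - Q^i)) * Af v (2*i - 1) + \<i> * (Q^i * si) * Af v (2*i)"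
      using f by (simp add: Xf_def Bf_def)
    also have "\<dots> = \<i> * (si * (1 - Q^i)) * (a * v (2*i - 2)) + \<i> * (Q^i * si) * ((a - ai) * v (2*i) + ai * v (Suc (2*i)))"
      by (simp only: A1 A2)
    finally show ?thesis by (simp add: algebra_simps)
  qed
  have Y: "Yf v (2*i) = ai * Binv v (Suc (2*i))" using i by (simp add: Yf_def Ainv_def n_def2)
  show ?thesis
  proof (cases "i = D - 1")
    case True
    then have f: "Suc (2*i) = n - 1" "Suc (2*i) < n" "Q^i = Q^(D-1)" using i D1 unfolding n_def2 by auto
    have "Zf v (2*i) = \<i> * si * (a * (1 - Q^i) * v (2*i - 2) + (a - ai) * Q^i * v (2*i) + Q^i * ai * v (Suc (2*i)))
       + ai * (- \<i> * s * v (Suc (2*i))) / Q"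
      using X Y f n1 by (simp add: Zf_def Binv_def)
    also have "\<dots> = Tp (\<lambda>j. v (2*j)) i"
    proof -
      have qi: "Q^i = s * s / Q" using f(3) QD1 by simp
      have ii: "2 * (i - 1) = 2 * i - 2" by simp
      show ?thesis unfolding Tp_def ii f(3)[symmetric] unfolding qi si_inv using s_nz Q_nz
        by (simp add: field_simps)
    qed
    finally show ?thesis .
  next
    case False
    then have f: "Suc (2*i) \<noteq> n - 1" "Suc (2*i) < n" "odd (Suc (2*i))" "Suc (2*i) \<noteq> 0" "(Suc (2*i) + 1) div 2 = Suc i"
      "Suc (Suc (2*i)) = 2 * Suc i" "2 * i - 2 = 2 * (i - 1)"
      using i unfolding n_def2 by presburger+
    have Bi: "Binv v (Suc (2*i)) = - \<i> * (Q^(Suc i) * si * v (Suc (2*i)) + (s - Q^(Suc i) * si) * v (Suc (Suc (2*i))))"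
      using f(1-5) by (simp add: Binv_def)
    have "Zf v (2*i) = \<i> * si * (a * (1 - Q^i) * v (2*i - 2) + (a - ai) * Q^i * v (2*i) + Q^i * ai * v (Suc (2*i)))
       + ai * (- \<i> * (Q^(Suc i) * si * v (Suc (2*i)) + (s - Q^(Suc i) * si) * v (Suc (Suc (2*i))))) / Q"
      unfolding Zf_def X Y Bi ..
    also have "\<dots> = Tp (\<lambda>j. v (2*j)) i"
    proof -
      have ii: "2 * (i - 1) = 2 * i - 2" "2 * Suc i = Suc (Suc (2*i))" by simp_all
      show ?thesis unfolding Tp_def ii unfolding si_inv QD1 using s_nz Q_nz
        by (simp add: field_simps)
    qed
    finally show ?thesis .
  qed
qed

end


lemma foldr_comp: "foldr (\<lambda>m. (\<circ>) (h m)) xs g = foldr (\<lambda>m. (\<circ>) (h m)) xs id \<circ> g"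
  by (induct xs) (auto simp: comp_assoc)
context L begin

definition "xx i = inverse (Q ^ i)"
definition "yv k i = xx i ^ k"
definition "c1 m = tau D q e * qp q (real m)"
definition "c2 m = inverse (tau D q e) * qp q (- real m)"
definition "zk m = c1 m + c2 (Suc m)"
definition "bk k = \<i> * si * (a - ai - a * Q^k + ai * inverse (Q^k))"

lemma zk_eq: "zk k = \<i> * si * (a * Q^k - Q^(D-1) * ai * inverse (Q^k))"
proof -
  have "zk k = \<i> * si * a * Q^k + inverse (\<i> * si * a) * inverse (Q^(Suc k))"
    unfolding zk_def c1_def c2_def tau_eq qp_nat qp_neg_nat by simp
  also have "\<dots> = \<i> * si * (a * Q^k - Q^(D-1) * ai * inverse (Q^k))"
    unfolding QD1 si_inv ai_inv using s_nz a_nz Q_nz by (simp add: field_simps)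
  finally show ?thesis .
qed

lemma si_nz: "si \<noteq> 0" using s_si by auto

lemma c1c2: "c1 m * c2 (Suc m) = inverse Q"
  unfolding c1_def c2_def tau_eq qp_nat qp_neg_nat using si_nz a_nz Q_nz
  by (simp add: field_simps)

lemma xx_inj: "xx i = xx j \<Longrightarrow> i = j"
proof -
  assume "xx i = xx j"
  then have "Q ^ i = Q ^ j" by (simp add: xx_def)
  then have "of_nat (q ^ i) = (of_nat (q ^ j) :: complex)" by (simp add: Q_def)
  then have "q ^ i = q ^ j" using of_nat_eq_iff by blast
  then show "i = j" using q2 by simp
qed

lemma Tp_y: assumes i: "i < D" shows "Tp (yv k) i = zk k * yv k i + bk k * yv (k - 1) i"
proof -
  define Y where "Y = yv k i"
  have h1: "yv k (i - 1) * (1 - Q^i) = Q^k * Y * (1 - Q^i)"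
  proof (cases i)
    case 0 then show ?thesis by simp
  next
    case (Suc j)
    then have "yv k (i - 1) = Q^k * Y" unfolding Y_def yv_def xx_def using Q_nz
      by (simp add: power_mult_distrib field_simps)
    then show ?thesis by simp
  qed
  have h2: "yv k (Suc i) = inverse (Q^k) * Y" unfolding Y_def yv_def xx_def using Q_nz
    by (simp add: power_mult_distrib field_simps)
  have "Tp (yv k) i = \<i> * si * (a * (yv k (i - 1) * (1 - Q^i)) + (a - ai) * Q^i * Y + (Q^i - Q^(D-1)) * ai * yv k (Suc i))"
    unfolding Tp_def Y_def by (simp add: algebra_simps)
  also have "\<dots> = \<i> * si * (a * (Q^k * Y * (1 - Q^i)) + (a - ai) * Q^i * Y + (Q^i - Q^(D-1)) * ai * (inverse (Q^k) * Y))"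
    unfolding h1 h2 ..
  also have "\<dots> = zk k * yv k i + bk k * yv (k - 1) i"
  proof (cases k)
    case 0 then show ?thesis unfolding zk_eq bk_def Y_def yv_def by (simp add: algebra_simps)
  next
    case (Suc k')
    have Yk: "Y = inverse (Q^i) * yv k' i" unfolding Y_def yv_def xx_def Suc by simp
    have Yk2: "yv k i = inverse (Q^i) * yv k' i" using Yk Y_def by simp
    show ?thesis unfolding zk_eq bk_def Yk Yk2 unfolding Suc diff_Suc_1 using Q_nz
      by (simp add: field_simps)
  qed
  finally show ?thesis .
qed

definition "opT z w = (\<lambda>i. Tp w i - z * w i)"
definition "GT ms = foldr (\<lambda>m g. opT (zk m) \<circ> g) ms id"

lemma Tp_cong: assumes "\<And>j. j < D \<Longrightarrow> w j = w' j" "i < D" shows "Tp w i = Tp w' i"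
proof (cases "Suc i < D")
  case True then show ?thesis using assms by (simp add: Tp_def)
next
  case False
  then have "i = D - 1" using assms by simp
  then show ?thesis using assms by (simp add: Tp_def)
qed

lemma Tp_sum: "Tp (\<lambda>j. \<Sum>k<D. c k * yv k j) i = (\<Sum>k<D. c k * Tp (yv k) i)"
  unfolding Tp_def by (simp add: sum_distrib_left sum.distrib ring_distribs mult.assoc mult.left_commute)

definition "Vm m w \<longleftrightarrow> (\<exists>c. (\<forall>k\<ge>m. c k = 0) \<and> (\<forall>i<D. w i = (\<Sum>k<D. c k * yv k i)))"

lemma bk0: "bk 0 = 0" by (simp add: bk_def)

lemma Vstep: assumes m: "Suc m \<le> D" and V: "Vm (Suc m) w" shows "Vm m (opT (zk m) w)"
proof -
  obtain c where c0: "\<And>k. k \<ge> Suc m \<Longrightarrow> c k = 0" and cw: "\<And>i. i < D \<Longrightarrow> w i = (\<Sum>k<D. c k * yv k i)"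
    using V unfolding Vm_def by blast
  define c' where "c' k = c k * (zk k - zk m) + c (Suc k) * bk (Suc k)" for k
  obtain d where d: "D = Suc d" using m by (cases D) auto
  have "\<forall>i<D. opT (zk m) w i = (\<Sum>k<D. c' k * yv k i)"
  proof (intro allI impI)
    fix i assume i: "i < D"
    have "opT (zk m) w i = Tp (\<lambda>j. \<Sum>k<D. c k * yv k j) i - zk m * (\<Sum>k<D. c k * yv k i)"
      unfolding opT_def using cw i by (simp add: Tp_cong[of w "\<lambda>j. \<Sum>k<D. c k * yv k j"])
    also have "\<dots> = (\<Sum>k<D. c k * (zk k * yv k i + bk k * yv (k - 1) i)) - (\<Sum>k<D. c k * zk m * yv k i)"
      unfolding Tp_sum using i by (simp add: Tp_y sum_distrib_left mult.assoc mult.left_commute)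
    also have "\<dots> = (\<Sum>k<D. c k * (zk k - zk m) * yv k i) + (\<Sum>k<D. c k * bk k * yv (k - 1) i)"
      by (simp add: sum_subtractf[symmetric] sum.distrib[symmetric] algebra_simps)
    also have "(\<Sum>k<D. c k * bk k * yv (k - 1) i) = (\<Sum>k<D. c (Suc k) * bk (Suc k) * yv k i)"
    proof -
      have sh1: "\<And>f. (\<Sum>k<D. f k) = f 0 + (\<Sum>k<d. f (Suc k))" by (simp only: d sum.lessThan_Suc_shift)
      have sh2: "\<And>f. (\<Sum>k<D. f k) = (\<Sum>k<d. f k) + f d" by (simp add: d)
      have "(\<Sum>k<D. c k * bk k * yv (k - 1) i) = (\<Sum>k<d. c (Suc k) * bk (Suc k) * yv k i)"
        unfolding sh1 by (simp add: bk0)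
      also have "\<dots> = (\<Sum>k<D. c (Suc k) * bk (Suc k) * yv k i)"
        unfolding sh2 using c0[of "Suc d"] m d by simp
      finally show ?thesis .
    qed
    finally show "opT (zk m) w i = (\<Sum>k<D. c' k * yv k i)"
      by (simp add: c'_def sum.distrib[symmetric] algebra_simps)
  qed
  moreover have "\<forall>k\<ge>m. c' k = 0"
  proof (intro allI impI)
    fix k assume "m \<le> k"
    then consider "k = m" | "k \<ge> Suc m" by linarith
    then show "c' k = 0" by cases (auto simp: c'_def c0)
  qed
  ultimately show ?thesis unfolding Vm_def by blast
qed

lemma GT_Suc: "GT [0..<Suc m] = GT [0..<m] \<circ> opT (zk m)"
  by (simp add: GT_def) (rule foldr_comp)

lemma GT_zero: "m \<le> D \<Longrightarrow> Vm m w \<Longrightarrow> i < D \<Longrightarrow> GT [0..<m] w i = 0"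
proof (induction m arbitrary: w)
  case 0
  then obtain c where "\<forall>k. c k = 0" "\<forall>i<D. w i = (\<Sum>k<D. c k * yv k i)" unfolding Vm_def by auto
  then show ?case using 0 by (simp add: GT_def)
next
  case (Suc m)
  have "Vm m (opT (zk m) w)" using Suc.prems by (intro Vstep) auto
  then have "GT [0..<m] (opT (zk m) w) i = 0" using Suc by auto
  then show ?case by (simp only: GT_Suc comp_def)
qed

lemma newton: "\<exists>p. degree p \<le> m \<and> (\<forall>i\<le>m. poly p (xx i) = w i)"
proof (induction m)
  case 0
  show ?case by (rule exI[of _ "[:w 0:]"]) simp
next
  case (Suc m)
  obtain p where p: "degree p \<le> m" "\<And>i. i \<le> m \<Longrightarrow> poly p (xx i) = w i" using Suc by blast
  define N where "N = (\<Prod>j\<in>{..m}. [:- xx j, 1:])"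
  have Nz: "poly N (xx i) = 0" if "i \<le> m" for i
    unfolding N_def poly_prod using that by (auto intro!: bexI[of _ i])
  have Nnz: "poly N (xx (Suc m)) \<noteq> 0"
    unfolding N_def poly_prod using xx_inj by fastforce
  have dN: "degree N \<le> Suc m"
  proof -
    have "degree N \<le> sum (degree \<circ> (\<lambda>j. [:- xx j, 1:])) {..m}"
      unfolding N_def by (rule degree_prod_sum_le) simp
    also have "\<dots> = Suc m" by simp
    finally show ?thesis .
  qed
  define c where "c = (w (Suc m) - poly p (xx (Suc m))) / poly N (xx (Suc m))"
  define p' where "p' = p + smult c N"
  have "degree p' \<le> Suc m"
    unfolding p'_def using p(1) dN degree_add_le[of p m "smult c N"] degree_smult_le[of c N]
    by (meson degree_add_le le_SucI order_trans)
  moreover have "\<forall>i\<le>Suc m. poly p' (xx i) = w i"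
  proof (intro allI impI)
    fix i assume "i \<le> Suc m"
    then consider "i \<le> m" | "i = Suc m" by linarith
    then show "poly p' (xx i) = w i"
    proof cases
      case 1 then show ?thesis using p Nz by (simp add: p'_def)
    next
      case 2 then show ?thesis using Nnz by (simp add: p'_def c_def)
    qed
  qed
  ultimately show ?case by blast
qed

lemma Vm_all: "Vm D w"
proof -
  obtain p where p: "degree p \<le> D - 1" "\<And>i. i \<le> D - 1 \<Longrightarrow> poly p (xx i) = w i" using newton by blast
  have dp: "degree p < D" using p(1) D1 by linarith
  have "\<forall>k\<ge>D. coeff p k = 0" using dp by (auto intro: coeff_eq_0)
  moreover have "\<forall>i<D. w i = (\<Sum>k<D. coeff p k * yv k i)"
  proof (intro allI impI)
    fix i assume i: "i < D"
    have "w i = poly p (xx i)" using p(2)[of i] i by simp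
    also have "\<dots> = (\<Sum>k\<le>degree p. coeff p k * xx i ^ k)" by (rule poly_altdef)
    also have "\<dots> = (\<Sum>k<D. coeff p k * xx i ^ k)"
      by (rule sum.mono_neutral_left) (use dp in \<open>auto intro: coeff_eq_0\<close>)
    finally show "w i = (\<Sum>k<D. coeff p k * yv k i)" by (simp add: yv_def)
  qed
  ultimately show ?thesis unfolding Vm_def by blast
qed

lemma GT_all: "i < D \<Longrightarrow> GT [0..<D] w i = 0"
  using GT_zero[OF order.refl Vm_all] .

end

context L begin

definition "opX c v = (\<lambda>r. if r < n then Xf v r - c * v r else 0)"
definition "opZ z v = (\<lambda>r. if r < n then Zf v r - z * v r else 0)"

lemma opX_apply: "opX c v r = (if r < n then Xf v r - c * v r else 0)" by (simp add: opX_def)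
lemma opZ_apply: "opZ z v r = (if r < n then Zf v r - z * v r else 0)" by (simp add: opZ_def)
lemma Zf_out: "r \<ge> n \<Longrightarrow> Zf v r = 0" by (simp add: Zf_def Xf_out Yf_out)

lemma Xf_zero: "Xf (\<lambda>_. 0) = (\<lambda>_. 0)"
  using Xf_lin[of 0 "\<lambda>_. 0" 0 "\<lambda>_. 0"] by simp

lemma Xf_opX: "Xf (opX d v) = (\<lambda>r. Xf (Xf v) r - d * Xf v r)"
proof -
  have "Xf (opX d v) = Xf (\<lambda>j. 1 * Xf v j + (- d) * v j)"
    by (rule Xf_cong) (simp add: opX_def)
  also have "\<dots> = (\<lambda>r. Xf (Xf v) r - d * Xf v r)" unfolding Xf_lin by simp
  finally show ?thesis .
qed

lemma Xf_Zf: "Xf (Zf v) = (\<lambda>r. Xf (Xf v) r + (if r < n then v r / Q else 0))"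
proof -
  have "Xf (Zf v) = Xf (\<lambda>j. 1 * Xf v j + inverse Q * Yf v j)"
    by (rule Xf_cong) (simp add: Zf_def divide_inverse mult.commute)
  also have "\<dots> = (\<lambda>r. Xf (Xf v) r + (if r < n then v r / Q else 0))"
    unfolding Xf_lin by (auto simp: Xf_Yf Xf_out divide_inverse mult.commute)
  finally show ?thesis .
qed

lemma Zf_Xf: "Zf (Xf v) = (\<lambda>r. Xf (Xf v) r + (if r < n then v r / Q else 0))"
  by (auto simp: Zf_def Yf_Xf Xf_out Yf_out)

lemma XZ_comm: "Xf (Zf v) = Zf (Xf v)"
  unfolding Xf_Zf Zf_Xf ..

lemma Xf_opZ: "Xf (opZ z v) = opZ z (Xf v)"
proof -
  have "Xf (opZ z v) = Xf (\<lambda>j. 1 * Zf v j + (- z) * v j)"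
    by (rule Xf_cong) (simp add: opZ_def)
  also have "\<dots> = opZ z (Xf v)" unfolding Xf_lin XZ_comm by (auto simp: opZ_def Xf_out Zf_out)
  finally show ?thesis .
qed

lemma opX_comm: "opX c (opX d v) = opX d (opX c v)"
  by (rule ext) (simp add: opX_apply Xf_opX algebra_simps)

lemma opX_pair: assumes "c * d = inverse Q" shows "opX c (opX d v) = Xf (opZ (c + d) v)"
proof -
  have "Xf (opZ (c + d) v) = opZ (c + d) (Xf v)" by (rule Xf_opZ)
  then show ?thesis using assms
    by (auto simp: opX_apply opZ_apply Xf_opX Zf_Xf divide_inverse algebra_simps)
qed

definition "GZ ms = foldr (\<lambda>m g. opZ (zk m) \<circ> g) ms id"

lemma GZ_even: "i < D \<Longrightarrow> GZ ms v (2*i) = GT ms (\<lambda>j. v (2*j)) i"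
proof (induction ms arbitrary: i)
  case Nil then show ?case by (simp add: GZ_def GT_def)
next
  case (Cons m ms)
  have i2: "2 * i < n" using Cons.prems by (simp add: n_def2)
  have "GZ (m # ms) v (2*i) = Zf (GZ ms v) (2*i) - zk m * GZ ms v (2*i)"
    using i2 by (simp add: GZ_def opZ_apply)
  also have "\<dots> = Tp (\<lambda>j. GZ ms v (2*j)) i - zk m * GZ ms v (2*i)"
    using Cons.prems by (simp add: Zf_even)
  also have "\<dots> = Tp (GT ms (\<lambda>j. v (2*j))) i - zk m * GT ms (\<lambda>j. v (2*j)) i"
    using Cons by (simp add: Tp_cong[of "\<lambda>j. GZ ms v (2*j)" "GT ms (\<lambda>j. v (2*j))"])
  also have "\<dots> = GT (m # ms) (\<lambda>j. v (2*j)) i" by (simp add: GT_def opT_def)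
  finally show ?case .
qed

lemma Xf_GZ: "Xf (GZ ms v) = GZ ms (Xf v)"
  by (induction ms) (simp_all add: GZ_def Xf_opZ)

lemma Xf_eo: assumes u: "\<And>j. j < D \<Longrightarrow> u (2*j) = 0" and i: "i < D"
  shows "Xf u (2*i) = \<i> * Q^i * si * ai * u (Suc (2*i))"
proof -
  have A1: "Af u (2*i) = ai * u (Suc (2*i))" using i u[OF i] by (simp add: Af_def n_def2)
  show ?thesis
  proof (cases "i = 0")
    case True
    have "Xf u 0 = \<i> * si * Af u 0" using n_pos by (simp add: Xf_def Bf_def)
    then show ?thesis using A1 True by simp
  next
    case False
    then have f: "2*i \<noteq> 0" "2*i \<noteq> n - 1" "2*i < n" "2*i - 1 < n" "odd (2*i - 1)" "2*i - 1 - 1 = 2*(i - 1)"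
      using i unfolding n_def2 by presburger+
    have A2: "Af u (2*i - 1) = 0" using f u[of "i - 1"] i by (simp add: Af_def)
    have "Xf u (2*i) = \<i> * (si * (1 - Q^i)) * Af u (2*i - 1) + \<i> * (Q^i * si) * Af u (2*i)"
      using f by (simp add: Xf_def Bf_def)
    then show ?thesis using A1 A2 by simp
  qed
qed

lemma GZ_zero: assumes r: "r < n" shows "GZ [0..<D] v r = 0"
proof -
  have ev: "\<And>v j. j < D \<Longrightarrow> GZ [0..<D] v (2*j) = 0" by (simp add: GZ_even GT_all)
  define i where "i = r div 2"
  have "r = 2*i \<or> r = Suc (2*i)" unfolding i_def by presburger
  moreover have i: "i < D" using calculation r by (auto simp: n_def2)
  moreover have "GZ [0..<D] v (Suc (2*i)) = 0"
  proof -
    have "Xf (GZ [0..<D] v) (2*i) = 0" unfolding Xf_GZ using ev i .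
    moreover have "Xf (GZ [0..<D] v) (2*i) = \<i> * Q^i * si * ai * GZ [0..<D] v (Suc (2*i))"
      using ev i by (intro Xf_eo) auto
    ultimately show ?thesis using Q_nz si_nz a_ai by auto
  qed
  ultimately show ?thesis using ev by auto
qed

definition "KX ms = foldr (\<lambda>m g. opX (c1 m) \<circ> (opX (c2 (Suc m)) \<circ> g)) ms id"

lemma opZ_funpow: "opZ z ((Xf ^^ k) u) = (Xf ^^ k) (opZ z u)"
  by (induction k) (simp_all add: Xf_opZ[symmetric])

lemma KX_eq: "KX ms v = (Xf ^^ length ms) (GZ ms v)"
proof (induction ms)
  case Nil then show ?case by (simp add: KX_def GZ_def)
next
  case (Cons m ms)
  have "KX (m # ms) v = opX (c1 m) (opX (c2 (Suc m)) (KX ms v))" by (simp add: KX_def)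
  also have "\<dots> = Xf (opZ (zk m) (KX ms v))" unfolding zk_def by (rule opX_pair[OF c1c2])
  also have "\<dots> = Xf ((Xf ^^ length ms) (opZ (zk m) (GZ ms v)))" unfolding Cons opZ_funpow ..
  also have "\<dots> = (Xf ^^ length (m # ms)) (GZ (m # ms) v)" by (simp add: GZ_def)
  finally show ?case .
qed

lemma Xf_pow_zero: "(\<And>r. r < n \<Longrightarrow> u r = 0) \<Longrightarrow> (Xf ^^ Suc k) u = (\<lambda>_. 0)"
proof (induction k)
  case 0
  have "Xf u = Xf (\<lambda>_. 0)" by (rule Xf_cong) (simp add: 0)
  then show ?case by (simp add: Xf_zero)
next
  case (Suc k)
  then have "(Xf ^^ Suc k) u = (\<lambda>_. 0)" by blast
  then show ?case by (simp add: Xf_zero)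
qed

lemma KX_zero: "KX [0..<D] v = (\<lambda>_. 0)"
proof -
  obtain d where d: "D = Suc d" using D1 by (cases D) auto
  have "KX [0..<D] v = (Xf ^^ Suc d) (GZ [0..<D] v)" unfolding KX_eq by (simp only: length_upt diff_zero d)
  also have "\<dots> = (\<lambda>_. 0)" by (rule Xf_pow_zero) (rule GZ_zero)
  finally show ?thesis .
qed

end


lemma mv_entry: assumes "M \<in> carrier_mat n n" "r < n"
  shows "(M *\<^sub>v vec n f) $ r = (\<Sum>c<n. M $$ (r, c) * f c)"
  using assms by (simp add: scalar_prod_def lessThan_atLeast0)

context L begin

lemma tmat_carrier: "tmat D q e \<in> carrier_mat n n" by (simp add: tmat_def n_def)
lemma t'mat_carrier: "t'mat D q \<in> carrier_mat n n" by (simp add: t'mat_def n_def)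
lemma Xmat_carrier: "Xmat D q e \<in> carrier_mat n n"
  using tmat_carrier t'mat_carrier by (simp add: Xmat_def)

lemma sum_if_2: fixes f g :: "nat \<Rightarrow> complex" assumes "finite A" "{c \<in> A. P c} = {x, y}" "x \<noteq> y"
  shows "(\<Sum>c\<in>A. (if P c then g c else 0) * f c) = g x * f x + g y * f y"
proof -
  have "(\<Sum>c\<in>A. (if P c then g c else 0) * f c) = (\<Sum>c\<in>A. if P c then g c * f c else 0)"
    by (rule sum.cong) auto
  also have "\<dots> = (\<Sum>c\<in>{c \<in> A. P c}. g c * f c)" using assms(1) by (simp add: sum.inter_filter)
  also have "\<dots> = g x * f x + g y * f y" using assms(2,3) by simp
  finally show ?thesis .
qed

lemma sum_if_1: fixes f g :: "nat \<Rightarrow> complex" assumes "finite A" "{c \<in> A. P c} = {x}"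
  shows "(\<Sum>c\<in>A. (if P c then g c else 0) * f c) = g x * f x"
proof -
  have "(\<Sum>c\<in>A. (if P c then g c else 0) * f c) = (\<Sum>c\<in>A. if P c then g c * f c else 0)"
    by (rule sum.cong) auto
  also have "\<dots> = (\<Sum>c\<in>{c \<in> A. P c}. g c * f c)" using assms(1) by (simp add: sum.inter_filter)
  also have "\<dots> = g x * f x" using assms(2) by simp
  finally show ?thesis .
qed

lemma tmat_vec: "tmat D q e *\<^sub>v vec n f = vec n (Af f)"
proof (rule eq_vecI)
  fix r assume "r < dim_vec (vec n (Af f))"
  then have r: "r < n" by simp
  have "(tmat D q e *\<^sub>v vec n f) $ r = (\<Sum>c<n. (if r div 2 = c div 2 then t_entry q e (r mod 2) (c mod 2) else 0) * f c)"
    unfolding mv_entry[OF tmat_carrier r] by (rule sum.cong) (use r in \<open>simp_all add: tmat_def n_def\<close>)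
  also have "\<dots> = Af f r"
  proof (cases "even r")
    case True
    have "{c \<in> {..<n}. r div 2 = c div 2} = {r, Suc r}" using True r unfolding n_def2 by (auto; presburger)
    moreover have "r mod 2 = 0" "Suc r mod 2 = 1" using True by presburger+
    ultimately show ?thesis using True r
      by (simp add: sum_if_2[where x = r and y = "Suc r"] Af_def t_entry_def a_def ai_def)
  next
    case False
    have "{c \<in> {..<n}. r div 2 = c div 2} = {r - 1, r}" using False r unfolding n_def2 by (auto; presburger)
    moreover have "r mod 2 = 1" "(r - 1) mod 2 = 0" "r - 1 \<noteq> r" using False by presburger+
    ultimately show ?thesis using False r
      by (simp add: sum_if_2[where x = "r - 1" and y = r] Af_def t_entry_def a_def ai_def)
  qed
  finally show "(tmat D q e *\<^sub>v vec n f) $ r = vec n (Af f) $ r" using r by simp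
qed (simp add: tmat_def n_def)

lemma si_eq: "qp q (- (real D / 2)) = si" "qp q (- real D / 2) = si" by (simp_all add: si_def)
lemma s_eq: "qp q (real D / 2) = s" by (simp add: s_def)

lemma t'mat_vec: "t'mat D q *\<^sub>v vec n f = vec n (Bf f)"
proof (rule eq_vecI)
  fix r assume "r < dim_vec (vec n (Bf f))"
  then have r: "r < n" by simp
  define g where "g c = (let i = (r + 1) div 2 in if i = 0 \<or> i = D then \<i> * qp q (- real D / 2)
     else t'_entry D q i ((r + 1) mod 2) ((c + 1) mod 2))" for c
  have "(t'mat D q *\<^sub>v vec n f) $ r = (\<Sum>c<n. (if (r + 1) div 2 = (c + 1) div 2 then g c else 0) * f c)"
    unfolding mv_entry[OF t'mat_carrier r] by (rule sum.cong) (use r in \<open>simp_all add: t'mat_def n_def g_def\<close>)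
  also have "\<dots> = Bf f r"
  proof -
    consider "r = 0" | "r = n - 1" | "odd r" "r \<noteq> n - 1" | "even r" "r \<noteq> 0" by blast
    then show ?thesis
    proof cases
      case 1
      have "{c \<in> {..<n}. (r + 1) div 2 = (c + 1) div 2} = {0}" using 1 r by auto
      then show ?thesis using 1 r by (simp add: sum_if_1[where x = 0] Bf_def g_def si_eq)
    next
      case 2
      have "{c \<in> {..<n}. (r + 1) div 2 = (c + 1) div 2} = {n - 1}" using 2 r n_pos unfolding n_def2 by (auto; presburger)
      moreover have "(r + 1) div 2 = D" using 2 n_pos unfolding n_def2 by presburger
      ultimately show ?thesis using 2 r by (simp add: sum_if_1[where x = "n - 1"] Bf_def g_def si_eq)
    next
      case 3
      define i where "i = (r + 1) div 2"
      have S: "{c \<in> {..<n}. (r + 1) div 2 = (c + 1) div 2} = {r, Suc r}" using 3 r n_pos unfolding n_def2 by (auto; presburger)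
      have f: "i \<noteq> 0" "i \<noteq> D" "(r + 1) mod 2 = 0" "(Suc r + 1) mod 2 = 1" "r \<noteq> 0" "(r + 1) div 2 = i"
        using 3 r n_pos unfolding n_def2 i_def by presburger+
      have g1: "g r = \<i> * (si * (Q^D - Q^i + 1))"
        unfolding g_def Let_def f(6) using f by (simp add: t'_entry_def qp_nat si_eq)
      have g2: "g (Suc r) = \<i> * (s * (Q^i * inverse (Q^D) - 1))"
        unfolding g_def Let_def f(6) using f by (simp add: t'_entry_def qp_nat s_eq qp_i_D)
      have B: "Bf f r = \<i> * (si * (Q^D - Q^i + 1)) * f r + \<i> * (s * (Q^i * inverse (Q^D) - 1)) * f (Suc r)"
        unfolding Bf_def f(6) using 3 r f by simp
      have "(\<Sum>c<n. (if (r + 1) div 2 = (c + 1) div 2 then g c else 0) * f c) = g r * f r + g (Suc r) * f (Suc r)"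
        by (rule sum_if_2[OF _ S]) simp_all
      then show ?thesis unfolding B g1 g2 by simp
    next
      case 4
      define i where "i = (r + 1) div 2"
      have S: "{c \<in> {..<n}. (r + 1) div 2 = (c + 1) div 2} = {r - 1, r}" using 4 r n_pos unfolding n_def2 by (auto; presburger)
      have f: "i \<noteq> 0" "i \<noteq> D" "(r + 1) mod 2 = 1" "(r - 1 + 1) mod 2 = 0" "r - 1 \<noteq> r" "r div 2 = i" "r \<noteq> n - 1" "(r + 1) div 2 = i"
        using 4 r n_pos unfolding n_def2 i_def by presburger+
      have g1: "g (r - 1) = \<i> * (si * (1 - Q^i))"
        unfolding g_def Let_def f(8) using f by (simp add: t'_entry_def qp_nat si_eq)
      have g2: "g r = \<i> * (Q^i * si)"
        unfolding g_def Let_def f(8) using f by (simp add: t'_entry_def qp_nat qp_i_D2)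
      have B: "Bf f r = \<i> * (si * (1 - Q^i)) * f (r - 1) + \<i> * (Q^i * si) * f r"
        unfolding Bf_def f(6) using 4 r f by simp
      have "(\<Sum>c<n. (if (r + 1) div 2 = (c + 1) div 2 then g c else 0) * f c) = g (r - 1) * f (r - 1) + g r * f r"
        by (rule sum_if_2[OF _ S]) (use f in simp_all)
      then show ?thesis unfolding B g1 g2 by simp
    qed
  qed
  finally show "(t'mat D q *\<^sub>v vec n f) $ r = vec n (Bf f) $ r" using r by simp
qed (simp add: t'mat_def n_def)

lemma Xmat_vec: "Xmat D q e *\<^sub>v vec n f = vec n (Xf f)"
  unfolding Xmat_def Xf_def
  by (subst assoc_mult_mat_vec[OF t'mat_carrier tmat_carrier]) (simp_all add: tmat_vec t'mat_vec)

end


context L begin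

lemma opX_vec: "(Xmat D q e - c \<cdot>\<^sub>m 1\<^sub>m n) *\<^sub>v vec n f = vec n (opX c f)"
proof (rule eq_vecI)
  fix r assume "r < dim_vec (vec n (opX c f))"
  then have r: "r < n" by simp
  have C: "Xmat D q e - c \<cdot>\<^sub>m 1\<^sub>m n \<in> carrier_mat n n" by (intro minus_carrier_mat smult_carrier_mat one_carrier_mat)
  have "((Xmat D q e - c \<cdot>\<^sub>m 1\<^sub>m n) *\<^sub>v vec n f) $ r = (\<Sum>k<n. (Xmat D q e $$ (r, k) - c * (if r = k then 1 else 0)) * f k)"
    unfolding mv_entry[OF C r] by (rule sum.cong) (use r Xmat_carrier in auto)
  also have "\<dots> = (\<Sum>k<n. Xmat D q e $$ (r, k) * f k) - c * (\<Sum>k<n. (if r = k then 1 else 0) * f k)"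
    by (simp add: left_diff_distrib sum_subtractf sum_distrib_left mult.assoc)
  also have "(\<Sum>k<n. (if r = k then 1 else 0) * f k) = (\<Sum>k<n. (if r = k then f k else 0))"
    by (rule sum.cong) auto
  also have "\<dots> = f r" using r by simp
  also have "(\<Sum>k<n. Xmat D q e $$ (r, k) * f k) = Xf f r"
    using r mv_entry[OF Xmat_carrier r, of f] Xmat_vec[of f] by simp
  finally show "((Xmat D q e - c \<cdot>\<^sub>m 1\<^sub>m n) *\<^sub>v vec n f) $ r = vec n (opX c f) $ r"
    using r by (simp add: opX_def)
qed (simp add: Xmat_carrier[unfolded carrier_mat_def])

definition "compL xs = foldr (\<lambda>c g. opX c \<circ> g) xs id"

lemma cfc: "comp_fun_commute (\<lambda>c g. opX c \<circ> g)"
  by unfold_locales (auto simp: fun_eq_iff opX_comm)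

lemma compL_mset: "compL xs = fold_mset (\<lambda>c g. opX c \<circ> g) id (mset xs)"
proof (induction xs)
  case Nil then show ?case by (simp add: compL_def)
next
  case (Cons x xs)
  have "compL (x # xs) = opX x \<circ> compL xs" by (simp add: compL_def)
  also have "\<dots> = opX x \<circ> fold_mset (\<lambda>c g. opX c \<circ> g) id (mset xs)" unfolding Cons.IH ..
  also have "\<dots> = fold_mset (\<lambda>c g. opX c \<circ> g) id (add_mset x (mset xs))"
    by (simp only: comp_fun_commute.fold_mset_add_mset[OF cfc])
  finally show ?case by (simp only: mset.simps)
qed

lemma compL_perm: "mset xs = mset ys \<Longrightarrow> compL xs = compL ys"
  by (simp add: compL_mset)

lemma KX_compL: "KX ms = compL (concat (map (\<lambda>m. [c1 m, c2 (Suc m)]) ms))"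
  by (induction ms) (simp_all add: KX_def compL_def)

lemma dimX: "dim_row (Xmat D q e) = n" using Xmat_carrier by (metis carrier_matD(1))

lemma foldr_vec:
  "foldr (\<lambda>k M. ((Xmat D q e - (tau D q e * qp q (real k)) \<cdot>\<^sub>m 1\<^sub>m (dim_row (Xmat D q e))) *
                   (Xmat D q e - (inverse (tau D q e) * qp q (- real k)) \<cdot>\<^sub>m 1\<^sub>m (dim_row (Xmat D q e)))) * M)
     ks (1\<^sub>m (dim_row (Xmat D q e))) \<in> carrier_mat n n \<and>
   (\<forall>f. foldr (\<lambda>k M. ((Xmat D q e - (tau D q e * qp q (real k)) \<cdot>\<^sub>m 1\<^sub>m (dim_row (Xmat D q e))) *
                   (Xmat D q e - (inverse (tau D q e) * qp q (- real k)) \<cdot>\<^sub>m 1\<^sub>m (dim_row (Xmat D q e)))) * M)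
     ks (1\<^sub>m (dim_row (Xmat D q e))) *\<^sub>v vec n f = vec n (compL (concat (map (\<lambda>k. [c1 k, c2 k]) ks)) f))"
proof (induction ks)
  case Nil
  show ?case by (simp add: dimX compL_def)
next
  case (Cons k ks)
  let ?M = "foldr (\<lambda>k M. ((Xmat D q e - (tau D q e * qp q (real k)) \<cdot>\<^sub>m 1\<^sub>m (dim_row (Xmat D q e))) *
                   (Xmat D q e - (inverse (tau D q e) * qp q (- real k)) \<cdot>\<^sub>m 1\<^sub>m (dim_row (Xmat D q e)))) * M)
     ks (1\<^sub>m (dim_row (Xmat D q e)))"
  have M: "?M \<in> carrier_mat n n" using Cons by blast
  have C1: "Xmat D q e - c1 k \<cdot>\<^sub>m 1\<^sub>m n \<in> carrier_mat n n" by (intro minus_carrier_mat smult_carrier_mat one_carrier_mat)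
  have C2: "Xmat D q e - c2 k \<cdot>\<^sub>m 1\<^sub>m n \<in> carrier_mat n n" by (intro minus_carrier_mat smult_carrier_mat one_carrier_mat)
  have "(Xmat D q e - c1 k \<cdot>\<^sub>m 1\<^sub>m n) * (Xmat D q e - c2 k \<cdot>\<^sub>m 1\<^sub>m n) * ?M \<in> carrier_mat n n"
    using C1 C2 M by simp
  moreover have "\<forall>f. ((Xmat D q e - c1 k \<cdot>\<^sub>m 1\<^sub>m n) * (Xmat D q e - c2 k \<cdot>\<^sub>m 1\<^sub>m n) * ?M) *\<^sub>v vec n f
     = vec n (compL (concat (map (\<lambda>k. [c1 k, c2 k]) (k # ks))) f)"
  proof
    fix f
    have "((Xmat D q e - c1 k \<cdot>\<^sub>m 1\<^sub>m n) * (Xmat D q e - c2 k \<cdot>\<^sub>m 1\<^sub>m n) * ?M) *\<^sub>v vec n f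
       = (Xmat D q e - c1 k \<cdot>\<^sub>m 1\<^sub>m n) *\<^sub>v ((Xmat D q e - c2 k \<cdot>\<^sub>m 1\<^sub>m n) *\<^sub>v (?M *\<^sub>v vec n f))"
      using C1 C2 M by (simp add: assoc_mult_mat_vec[of _ n n _ n])
    also have "\<dots> = vec n (opX (c1 k) (opX (c2 k) (compL (concat (map (\<lambda>k. [c1 k, c2 k]) ks)) f)))"
      using Cons by (simp add: opX_vec)
    finally show "((Xmat D q e - c1 k \<cdot>\<^sub>m 1\<^sub>m n) * (Xmat D q e - c2 k \<cdot>\<^sub>m 1\<^sub>m n) * ?M) *\<^sub>v vec n f
     = vec n (compL (concat (map (\<lambda>k. [c1 k, c2 k]) (k # ks))) f)" by (simp add: compL_def)
  qed
  ultimately show ?case by (simp add: dimX c1_def c2_def)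
qed

end


lemma mset_concat2: "mset (concat (map (\<lambda>k. [f k, g k]) ks)) = mset (map f ks) + mset (map g ks)"
  by (induction ks) auto

context L begin

lemma c1_0: "c1 0 = tau D q e" by (simp add: c1_def qp0)

lemma Phi_vec:
  "(((Xmat D q e - tau D q e \<cdot>\<^sub>m 1\<^sub>m (dim_row (Xmat D q e))) *
     (Xmat D q e - (inverse (tau D q e) * qp q (- real D)) \<cdot>\<^sub>m 1\<^sub>m (dim_row (Xmat D q e)))) *
    foldr (\<lambda>k M. ((Xmat D q e - (tau D q e * qp q (real k)) \<cdot>\<^sub>m 1\<^sub>m (dim_row (Xmat D q e))) *
                   (Xmat D q e - (inverse (tau D q e) * qp q (- real k)) \<cdot>\<^sub>m 1\<^sub>m (dim_row (Xmat D q e)))) * M)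
     [1..<D] (1\<^sub>m (dim_row (Xmat D q e)))) *\<^sub>v vec n f = vec n (\<lambda>_. 0)"
  (is "((?A * ?B) * ?P) *\<^sub>v _ = _")
proof -
  have P: "?P \<in> carrier_mat n n" "\<And>f. ?P *\<^sub>v vec n f = vec n (compL (concat (map (\<lambda>k. [c1 k, c2 k]) [1..<D])) f)"
    using foldr_vec[of "[1..<D]"] by blast+
  have A: "?A = Xmat D q e - c1 0 \<cdot>\<^sub>m 1\<^sub>m n" by (simp add: dimX c1_0)
  have B: "?B = Xmat D q e - c2 D \<cdot>\<^sub>m 1\<^sub>m n" by (simp add: dimX c2_def)
  have CA: "?A \<in> carrier_mat n n" unfolding A by (intro minus_carrier_mat smult_carrier_mat one_carrier_mat)
  have CB: "?B \<in> carrier_mat n n" unfolding B by (intro minus_carrier_mat smult_carrier_mat one_carrier_mat)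
  have "((?A * ?B) * ?P) *\<^sub>v vec n f = ?A *\<^sub>v (?B *\<^sub>v (?P *\<^sub>v vec n f))"
    using CA CB P(1) by (simp add: assoc_mult_mat_vec[of _ n n _ n])
  also have "\<dots> = vec n (compL (c1 0 # c2 D # concat (map (\<lambda>k. [c1 k, c2 k]) [1..<D])) f)"
    unfolding P(2) A B opX_vec by (simp add: compL_def)
  also have "compL (c1 0 # c2 D # concat (map (\<lambda>k. [c1 k, c2 k]) [1..<D])) = (\<lambda>_ _. 0)"
  proof -
  have "compL (c1 0 # c2 D # concat (map (\<lambda>k. [c1 k, c2 k]) [1..<D])) = compL (concat (map (\<lambda>m. [c1 m, c2 (Suc m)]) [0..<D]))"
  proof (rule compL_perm)
    have u1: "[0..<D] = 0 # [1..<D]" using D1 by (simp add: upt_conv_Cons)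
    have u2: "map (\<lambda>m. c2 (Suc m)) [0..<D] = map c2 [1..<D] @ [c2 D]"
    proof -
      have "map (\<lambda>m. c2 (Suc m)) [0..<D] = map c2 (map Suc [0..<D])" by simp
      also have "\<dots> = map c2 [1..<Suc D]" by (simp only: map_Suc_upt) simp
      also have "\<dots> = map c2 [1..<D] @ [c2 D]" using D1 by simp
      finally show ?thesis .
    qed
    show "mset (c1 0 # c2 D # concat (map (\<lambda>k. [c1 k, c2 k]) [1..<D])) = mset (concat (map (\<lambda>m. [c1 m, c2 (Suc m)]) [0..<D]))"
      unfolding mset_concat2 u2 by (simp add: u1 mset_concat2)
  qed
  also have "\<dots> = KX [0..<D]" by (simp add: KX_compL)
  also have "\<dots> = (\<lambda>_ _. 0)" by (rule ext) (simp add: KX_zero)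
  finally show ?thesis .
  qed
  finally show ?thesis by simp
qed

lemma mat_zero_by_vec: fixes M :: "complex mat" assumes M: "M \<in> carrier_mat n n" and h: "\<And>f. M *\<^sub>v vec n f = vec n (\<lambda>_. 0)"
  shows "M = 0\<^sub>m n n"
proof (rule eq_matI)
  fix i j assume ij: "i < dim_row (0\<^sub>m n n :: complex mat)" "j < dim_col (0\<^sub>m n n :: complex mat)"
  then have i: "i < n" and j: "j < n" by auto
  have "(M *\<^sub>v vec n (\<lambda>k. if k = j then 1 else 0)) $ i = (\<Sum>k<n. M $$ (i, k) * (if k = j then 1 else 0))"
    by (rule mv_entry[OF M i])
  also have "\<dots> = (\<Sum>k<n. if k = j then M $$ (i, k) else 0)" by (rule sum.cong) auto
  also have "\<dots> = M $$ (i, j)" using j by simp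
  finally show "M $$ (i, j) = 0\<^sub>m n n $$ (i, j)" using h i j by simp
qed (use M in auto)

lemma Phi_zero:
  "((Xmat D q e - tau D q e \<cdot>\<^sub>m 1\<^sub>m (dim_row (Xmat D q e))) *
     (Xmat D q e - (inverse (tau D q e) * qp q (- real D)) \<cdot>\<^sub>m 1\<^sub>m (dim_row (Xmat D q e)))) *
    foldr (\<lambda>k M. ((Xmat D q e - (tau D q e * qp q (real k)) \<cdot>\<^sub>m 1\<^sub>m (dim_row (Xmat D q e))) *
                   (Xmat D q e - (inverse (tau D q e) * qp q (- real k)) \<cdot>\<^sub>m 1\<^sub>m (dim_row (Xmat D q e)))) * M)
     [1..<D] (1\<^sub>m (dim_row (Xmat D q e))) = 0\<^sub>m n n"
proof (rule mat_zero_by_vec)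
  have P: "foldr (\<lambda>k M. ((Xmat D q e - (tau D q e * qp q (real k)) \<cdot>\<^sub>m 1\<^sub>m (dim_row (Xmat D q e))) *
                   (Xmat D q e - (inverse (tau D q e) * qp q (- real k)) \<cdot>\<^sub>m 1\<^sub>m (dim_row (Xmat D q e)))) * M)
     [1..<D] (1\<^sub>m (dim_row (Xmat D q e))) \<in> carrier_mat n n"
    using foldr_vec[of "[1..<D]"] by blast
  show "((Xmat D q e - tau D q e \<cdot>\<^sub>m 1\<^sub>m (dim_row (Xmat D q e))) *
     (Xmat D q e - (inverse (tau D q e) * qp q (- real D)) \<cdot>\<^sub>m 1\<^sub>m (dim_row (Xmat D q e)))) *
    foldr (\<lambda>k M. ((Xmat D q e - (tau D q e * qp q (real k)) \<cdot>\<^sub>m 1\<^sub>m (dim_row (Xmat D q e))) *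
                   (Xmat D q e - (inverse (tau D q e) * qp q (- real k)) \<cdot>\<^sub>m 1\<^sub>m (dim_row (Xmat D q e)))) * M)
     [1..<D] (1\<^sub>m (dim_row (Xmat D q e))) \<in> carrier_mat n n"
  proof -
    have CA: "Xmat D q e - tau D q e \<cdot>\<^sub>m 1\<^sub>m (dim_row (Xmat D q e)) \<in> carrier_mat n n"
      unfolding dimX by (rule minus_carrier_mat) simp
    have CB: "Xmat D q e - (inverse (tau D q e) * qp q (- real D)) \<cdot>\<^sub>m 1\<^sub>m (dim_row (Xmat D q e)) \<in> carrier_mat n n"
      unfolding dimX by (rule minus_carrier_mat) simp
    show ?thesis using mult_carrier_mat[OF mult_carrier_mat[OF CA CB] P] .
  qed
qed (rule Phi_vec)

lemma X_invertible: "invertible_mat (Xmat D q e)"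
proof -
  define B where "B = mat n n (\<lambda>(i, j). Yf (\<lambda>k. if k = j then 1 else 0) i)"
  have CB: "B \<in> carrier_mat n n" by (simp add: B_def)
  have XB: "Xmat D q e * B = 1\<^sub>m n"
  proof (rule eq_matI)
    fix i j assume "i < dim_row (1\<^sub>m n :: complex mat)" "j < dim_col (1\<^sub>m n :: complex mat)"
    then have i: "i < n" and j: "j < n" by auto
    have "(Xmat D q e * B) $$ (i, j) = (Xmat D q e *\<^sub>v col B j) $ i"
      using i j CB Xmat_carrier by simp
    also have "col B j = vec n (Yf (\<lambda>k. if k = j then 1 else 0))" using j by (simp add: B_def)
    also have "(Xmat D q e *\<^sub>v vec n (Yf (\<lambda>k. if k = j then 1 else 0))) $ i = (if i = j then 1 else 0)"
      using i by (simp add: Xmat_vec Xf_Yf)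
    finally show "(Xmat D q e * B) $$ (i, j) = 1\<^sub>m n $$ (i, j)" using i j by simp
  qed (use CB Xmat_carrier in auto)
  have BX: "B * Xmat D q e = 1\<^sub>m n" by (rule mat_mult_left_right_inverse[OF Xmat_carrier CB XB])
  show ?thesis unfolding invertible_mat_def inverts_mat_def square_mat.simps
    using XB BX CB Xmat_carrier by (intro conjI exI[of _ B]) auto
qed

end

theorem lemma9p4:
  fixes D q :: nat and e :: real
  assumes "prime_power q"
    and "D \<ge> 3"
    and "e \<in> {0, 1/2, 1, 3/2, 2}"
    and "e \<in> {1/2, 3/2} \<Longrightarrow> \<exists>r. q = r ^ 2"
  shows "invertible_mat (Xmat D q e) \<and>
    (\<forall>Y \<in> carrier_mat (2 * D) (2 * D).
       Y * Xmat D q e = 1\<^sub>m (2 * D) \<longrightarrow>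
       p_perp D q e Y (Xmat D q e) * h_perp D q e Y (Xmat D q e) = 0\<^sub>m (2 * D) (2 * D))"
proof -
  obtain p k where pk: "prime p" "k > 0" "q = p ^ k" using assms(1) unfolding prime_power_def by blast
  have "p ^ 1 \<le> p ^ k" using pk prime_gt_1_nat[of p] by (intro power_increasing) auto
  then have q2: "q \<ge> 2" using pk prime_ge_2_nat[of p] by simp
  interpret L D q e by unfold_locales (use assms(2) q2 in auto)
  let ?X = "Xmat D q e"
  let ?N = "2 * D"
  have XC: "?X \<in> carrier_mat ?N ?N" using Xmat_carrier by (simp add: n_def)
  have dX: "dim_row ?X = ?N" using XC by simp
  show ?thesis
  proof
    show "invertible_mat ?X" by (rule X_invertible)
    show "\<forall>Y \<in> carrier_mat ?N ?N. Y * ?X = 1\<^sub>m ?N \<longrightarrow> p_perp D q e Y ?X * h_perp D q e Y ?X = 0\<^sub>m ?N ?N"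
    proof (intro ballI impI)
      fix Y assume Y: "Y \<in> carrier_mat ?N ?N" and YX: "Y * ?X = 1\<^sub>m ?N"
      have XY: "?X * Y = 1\<^sub>m ?N" by (rule mat_mult_left_right_inverse[OF Y XC YX])
      have comm: "(?X - c \<cdot>\<^sub>m 1\<^sub>m ?N) * Y = Y * (?X - c \<cdot>\<^sub>m 1\<^sub>m ?N)" for c
      proof -
        have I: "c \<cdot>\<^sub>m 1\<^sub>m ?N \<in> carrier_mat ?N ?N" by simp
        have "(?X - c \<cdot>\<^sub>m 1\<^sub>m ?N) * Y = ?X * Y - (c \<cdot>\<^sub>m 1\<^sub>m ?N) * Y"
          by (rule minus_mult_distrib_mat[OF XC I Y])
        also have "\<dots> = 1\<^sub>m ?N - c \<cdot>\<^sub>m Y" using Y by (simp add: XY mult_smult_assoc_mat[of _ ?N ?N])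
        also have "\<dots> = Y * ?X - Y * (c \<cdot>\<^sub>m 1\<^sub>m ?N)"
          using Y mult_smult_distrib[OF Y one_carrier_mat, of c] by (simp add: YX)
        also have "\<dots> = Y * (?X - c \<cdot>\<^sub>m 1\<^sub>m ?N)"
          by (rule mult_minus_distrib_mat[OF Y XC I, symmetric])
        finally show ?thesis .
      qed
      define A1 where "A1 = ?X - tau D q e \<cdot>\<^sub>m 1\<^sub>m (dim_row ?X)"
      define A2 where "A2 = ?X - (inverse (tau D q e) * qp q (- real D)) \<cdot>\<^sub>m 1\<^sub>m (dim_row ?X)"
      define P where "P = foldr (\<lambda>k M. ((?X - (tau D q e * qp q (real k)) \<cdot>\<^sub>m 1\<^sub>m (dim_row ?X)) *
                   (?X - (inverse (tau D q e) * qp q (- real k)) \<cdot>\<^sub>m 1\<^sub>m (dim_row ?X))) * M)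
                   [1..<D] (1\<^sub>m (dim_row ?X))"
      have A1C: "A1 \<in> carrier_mat ?N ?N" unfolding A1_def dX by (rule minus_carrier_mat) simp
      have A2C: "A2 \<in> carrier_mat ?N ?N" unfolding A2_def dX by (rule minus_carrier_mat) simp
      have PC: "P \<in> carrier_mat ?N ?N" using foldr_vec[of "[1..<D]"] unfolding P_def n_def by blast
      have MC: "A1 * A2 \<in> carrier_mat ?N ?N" using A1C A2C by simp
      have c1: "A1 * Y = Y * A1" unfolding A1_def dX by (rule comm)
      have c2: "A2 * Y = Y * A2" unfolding A2_def dX by (rule comm)
      have cM: "(A1 * A2) * Y = Y * (A1 * A2)"
      proof -
        have "(A1 * A2) * Y = A1 * (A2 * Y)" using A1C A2C Y by simp
        also have "\<dots> = (A1 * Y) * A2" unfolding c2 using A1C A2C Y by simp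
        also have "\<dots> = Y * (A1 * A2)" unfolding c1 using A1C A2C Y by simp
        finally show ?thesis .
      qed
      have cMk: "(A1 * A2) * (Y ^\<^sub>m j) = (Y ^\<^sub>m j) * (A1 * A2)" for j
      proof (induction j)
        case 0 then show ?case using MC Y by (simp add: right_mult_one_mat[OF MC] left_mult_one_mat[OF MC])
      next
        case (Suc j)
        have YjC: "Y ^\<^sub>m j \<in> carrier_mat ?N ?N" using Y by simp
        have "(A1 * A2) * (Y ^\<^sub>m Suc j) = ((A1 * A2) * Y ^\<^sub>m j) * Y"
          by (simp add: assoc_mult_mat[OF MC YjC Y])
        also have "\<dots> = Y ^\<^sub>m j * ((A1 * A2) * Y)" unfolding Suc by (rule assoc_mult_mat[OF YjC MC Y])
        also have "\<dots> = (Y ^\<^sub>m Suc j) * (A1 * A2)" unfolding cM by (simp add: assoc_mult_mat[OF YjC Y MC])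
        finally show ?case .
      qed
      have Z: "(A1 * A2) * P = 0\<^sub>m ?N ?N" using Phi_zero unfolding A1_def A2_def P_def n_def .
      have YD: "Y ^\<^sub>m (D - 1) \<in> carrier_mat ?N ?N" using Y by simp
      have "p_perp D q e Y ?X * h_perp D q e Y ?X = (Y * (A1 * A2)) * (Y ^\<^sub>m (D - 1) * P)"
        unfolding p_perp_def h_perp_def A1_def A2_def P_def ..
      also have "\<dots> = Y * ((A1 * A2) * (Y ^\<^sub>m (D - 1) * P))"
        by (rule assoc_mult_mat[OF Y MC mult_carrier_mat[OF YD PC]])
      also have "\<dots> = Y * (((A1 * A2) * Y ^\<^sub>m (D - 1)) * P)" by (simp only: assoc_mult_mat[OF MC YD PC])
      also have "\<dots> = Y * ((Y ^\<^sub>m (D - 1) * (A1 * A2)) * P)" by (simp only: cMk)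
      also have "\<dots> = Y * (Y ^\<^sub>m (D - 1) * ((A1 * A2) * P))" by (simp only: assoc_mult_mat[OF YD MC PC])
      also have "\<dots> = 0\<^sub>m ?N ?N" unfolding Z using Y YD by simp
      finally show "p_perp D q e Y ?X * h_perp D q e Y ?X = 0\<^sub>m ?N ?N" .
    qed
  qed
qed


end
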